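(* Let $q$ be a prime power, $b,k,t$ positive integers with $b\le k$, $a\in\mathbb{F}_q$ nonzero, and $\boldsymbol{x}_i=(a^i0^{k-i})\in\mathbb{F}_q^k$ (the first $i$ coordinates equal to $a$, the rest $0$) for $i\in\{0,1,\ldots,k-b+1\}$. Then \[ r_b^{wt_b}(k,t)\ge N_b\big(\boldsymbol{B}^{(1)}_{wt_b}(t,\boldsymbol{x}_0,\ldots,\boldsymbol{x}_{k-b+1})\big), \] where this $(k-b+2)\times(k-b+2)$ matrix (rows/columns indexed by $0,\ldots,k-b+1$) has entries $0$ for $i=j$ and $[2t-2b+3-|i-j|]^+$ for $i\ne j$.
   Context: For $\boldsymbol{z}=(z_0,\ldots,z_{n-1}),\boldsymbol{w}\in\mathbb{F}_q^n$, $d_b(\boldsymbol{z},\boldsymbol{w})$ is the number of $i\in\{0,\ldots,n-1\}$ with $(z_i,\ldots,z_{i+b-1})\ne(w_i,\ldots,w_{i+b-1})$ (indices mod $n$), and $wt_b(\boldsymbol{x})=d_b(\boldsymbol{x},\boldsymbol{0})$ is the $b$-symbol weight function on $\mathbb{F}_q^k$. $[x]^+=\max\{x,0\}$. A systematic encoding $\mathrm{Enc}(\boldsymbol{x})=(\boldsymbol{x},p(\boldsymbol{x}))\in\mathbb{F}_q^{k+r}$ is a function-correcting $b$-symbol code for $f$ if $d_b(\mathrm{Enc}(\boldsymbol{x}_1),\mathrm{Enc}(\boldsymbol{x}_2))\ge 2t+1$ whenever $f(\boldsymbol{x}_1)\ne f(\boldsymbol{x}_2)$; $r_b^f(k,t)$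 is the smallest $r$ for which one exists. For an $M\times M$ nonnegative integer matrix $\boldsymbol{B}$, $N_b(\boldsymbol{B})$ is the smallest $r$ such that there exist $\boldsymbol{p}_1,\ldots,\boldsymbol{p}_M\in\mathbb{F}_q^r$ (in some ordering) with $d_b(\boldsymbol{p}_i,\boldsymbol{p}_j)\ge[\boldsymbol{B}]_{ij}$ for all $i,j$. *)

theory Defs
  imports Main
begin

(* Vectors in F_q^n are lists of length n over a finite field type 'a (q = CARD('a)). *)

(* b-symbol distance d_b(z,w): number of cyclic positions i whose length-b windows differ
   (indices mod n, n = length z; z and w are assumed to have equal length). *)
definition bdist :: "nat \<Rightarrow> 'a list \<Rightarrow> 'a list \<Rightarrow> nat" where
  "bdist b z w = card {i. i < length z \<and>
      (\<exists>j<b. z ! ((i + j) mod length z) \<noteq> w ! ((i + j) mod length z))}"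

definition bweight :: "nat \<Rightarrow> 'a::zero list \<Rightarrow> nat" where
  "bweight b x = bdist b x (replicate (length x) 0)"

(* p is the redundancy map of a systematic function-correcting b-symbol code
   Enc(x) = (x, p(x)) for f on F_q^k with redundancy r correcting t errors *)
definition is_fcbsc :: "nat \<Rightarrow> nat \<Rightarrow> nat \<Rightarrow> ('a list \<Rightarrow> 'c) \<Rightarrow> nat \<Rightarrow> ('a list \<Rightarrow> 'a list) \<Rightarrow> bool" where
  "is_fcbsc b k t f r p \<longleftrightarrow>
     (\<forall>x. length x = k \<longrightarrow> length (p x) = r) \<and>
     (\<forall>x1 x2. length x1 = k \<longrightarrow> length x2 = k \<longrightarrow> f x1 \<noteq> f x2 \<longrightarrow>
         2 * t + 1 \<le> bdist b (x1 @ p x1) (x2 @ p x2))"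

definition r_opt :: "nat \<Rightarrow> ('a list \<Rightarrow> 'c) \<Rightarrow> nat \<Rightarrow> nat \<Rightarrow> nat" where
  "r_opt b f k t = (LEAST r. \<exists>p. is_fcbsc b k t f r p)"

definition N_b :: "'a itself \<Rightarrow> nat \<Rightarrow> nat \<Rightarrow> (nat \<Rightarrow> nat \<Rightarrow> nat) \<Rightarrow> nat" where
  "N_b _ b M B = (LEAST r. \<exists>p :: nat \<Rightarrow> 'a list.
      (\<forall>i<M. length (p i) = r) \<and> (\<forall>i<M. \<forall>j<M. B i j \<le> bdist b (p i) (p j)))"

definition pos_part :: "int \<Rightarrow> nat" where
  "pos_part x = nat (max x 0)"

end

theory Submission
  imports Defs
begin

lemma concat_bound:
  fixes x1 x2 p1 p2 :: "'a list"
  assumes l1: "length x1 = k" and l2: "length x2 = k" and l3: "length p1 = r" and l4: "length p2 = r"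
    and bk: "b \<le> k" and b0: "0 < b"
    and D: "\<And>q. q < k \<Longrightarrow> x1!q \<noteq> x2!q \<Longrightarrow> m \<le> q \<and> q < M"
  shows "bdist b (x1@p1) (x2@p2) \<le> (M - m) + (b-1) + (b-1) + bdist b p1 p2"
proof -
  define n where "n = k + r"
  define c1 where "c1 = x1 @ p1"
  define c2 where "c2 = x2 @ p2"
  have lc: "length c1 = n" using l1 l3 by (simp add: c1_def n_def)
  define S where "S = {i. i < n \<and> (\<exists>j<b. c1 ! ((i + j) mod n) \<noteq> c2 ! ((i + j) mod n))}"
  define A where "A = {s. s < n \<and> (\<exists>j<b. (s+j) mod n < k \<and> x1 ! ((s+j) mod n) \<noteq> x2 ! ((s+j) mod n))}"
  define Bs where "Bs = {s. k - b < s \<and> s < k}"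
  define P where "P = {i. i < length p1 \<and> (\<exists>j<b. p1 ! ((i + j) mod length p1) \<noteq> p2 ! ((i + j) mod length p1))}"
  have c1n: "q < k \<Longrightarrow> c1 ! q = x1 ! q" "q \<ge> k \<Longrightarrow> c1 ! q = p1 ! (q - k)" for q
    using l1 by (auto simp: c1_def nth_append)
  have c2n: "q < k \<Longrightarrow> c2 ! q = x2 ! q" "q \<ge> k \<Longrightarrow> c2 ! q = p2 ! (q - k)" for q
    using l2 by (auto simp: c2_def nth_append)
  have SS: "S \<subseteq> A \<union> Bs \<union> (\<lambda>u. k + u) ` P"
  proof
    fix s assume "s \<in> S"
    then obtain j where s: "s < n" "j < b" and dj: "c1 ! ((s + j) mod n) \<noteq> c2 ! ((s + j) mod n)"
      unfolding S_def by auto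
    show "s \<in> A \<union> Bs \<union> (\<lambda>u. k + u) ` P"
    proof (cases "s < k")
      case True
      show ?thesis
      proof (cases "k - b < s")
        case True then show ?thesis using \<open>s < k\<close> by (simp add: Bs_def)
      next
        case False
        then have "s + j < k" using s bk by linarith
        then have "(s+j) mod n = s + j" using n_def by simp
        then have "s \<in> A" using s dj \<open>s+j<k\<close> c1n c2n unfolding A_def by auto
        then show ?thesis by simp
      qed
    next
      case False
      then obtain u where u: "s = k + u" by (metis le_add_diff_inverse not_less)
      show ?thesis
      proof (cases "s + j < n")
        case True
        then have e: "(s+j) mod n = k + (u + j)" using u by simp
        have "u + j < r" using True u n_def by simp
        then have "(u + j) mod length p1 = u + j" using l3 by simp
        then have "u \<in> P" unfolding P_def using dj e c1n c2n s l3 \<open>u+j<r\<close> by auto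
        then show ?thesis using u by blast
      next
        case False
        have lt: "s + j < 2 * n" using s bk n_def by linarith
        have e: "(s+j) mod n = s + j - n" using False lt
          by (metis add_diff_inverse_nat le_mod_geq mod_less mult_2 nat_add_left_cancel_less not_le)
        have "s + j - n < k" using s False n_def bk by linarith
        then have "s \<in> A" using s dj e c1n c2n unfolding A_def by auto
        then show ?thesis by simp
      qed
    qed
  qed
  have fin: "finite A" "finite Bs" "finite P" unfolding A_def Bs_def P_def by auto
  have cA: "card A \<le> M - m + (b - 1)"
  proof -
    define f where "f v = (v + n - (b-1)) mod n" for v
    have "A \<subseteq> f ` {m..<M + (b-1)}"
    proof
      fix s assume "s \<in> A"
      then obtain j where s: "s < n" "j < b" and pk: "(s+j) mod n < k"
        and d: "x1 ! ((s+j) mod n) \<noteq> x2 ! ((s+j) mod n)" unfolding A_def by auto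
      define p where "p = (s+j) mod n"
      have pm: "m \<le> p" "p < M" using D[OF pk d] p_def by auto
      have "f (p + (b-1) - j) = (p + n - j) mod n" unfolding f_def using s by (simp add: algebra_simps)
      also have "\<dots> = ((s + j) mod n + (n - j)) mod n" using s bk n_def p_def by simp
      also have "\<dots> = (s + j + (n - j)) mod n" by (simp add: mod_add_left_eq)
      also have "\<dots> = (s + n) mod n" using s bk n_def by simp
      also have "\<dots> = s" using s by simp
      finally have "s = f (p + (b-1) - j)" by simp
      moreover have "p + (b-1) - j \<in> {m..<M + (b-1)}" using pm s by auto
      ultimately show "s \<in> f ` {m..<M + (b-1)}" by blast
    qed
    then have "card A \<le> card (f ` {m..<M + (b-1)})" by (simp add: card_mono)
    also have "\<dots> \<le> card {m..<M + (b-1)}" by (rule card_image_le) simp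
    finally show ?thesis by simp
  qed
  have cB: "card Bs \<le> b - 1"
  proof -
    have "Bs = {k - b <..< k}" by (auto simp: Bs_def)
    then show ?thesis using bk by simp
  qed
  have cP: "card ((\<lambda>u. k + u) ` P) \<le> bdist b p1 p2"
    using card_image_le[OF fin(3)] unfolding bdist_def P_def by blast
  have "bdist b (x1@p1) (x2@p2) = card S" unfolding bdist_def S_def c1_def c2_def using lc c1_def by simp
  also have "\<dots> \<le> card (A \<union> Bs \<union> (\<lambda>u. k + u) ` P)" using SS fin by (intro card_mono) auto
  also have "\<dots> \<le> card A + card Bs + card ((\<lambda>u. k + u) ` P)"
    by (meson card_Un_le le_trans add_le_mono order_refl)
  finally show ?thesis using cA cB cP by linarith
qed

lemma xnth: "i \<le> k \<Longrightarrow> q < k \<Longrightarrow> (replicate i a @ replicate (k - i) 0) ! q = (if q < i then a else 0)"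
  by (auto simp: nth_append)

lemma weight_x:
  fixes a :: "'a::zero"
  assumes a: "a \<noteq> 0" and b0: "0 < b" and bk: "b \<le> k" and i: "i \<le> k - b + 1"
  shows "bweight b (replicate i a @ replicate (k - i) 0) = (if i = 0 then 0 else i + b - 1)"
proof -
  define x where "x = replicate i a @ replicate (k - i) 0"
  have lx: "length x = k" using i bk b0 by (simp add: x_def)
  have xn: "q < k \<Longrightarrow> x ! q \<noteq> 0 \<longleftrightarrow> q < i" for q using i bk a by (auto simp: x_def nth_append)
  have "bweight b x = card {s. s < k \<and> (\<exists>j<b. x ! ((s + j) mod k) \<noteq> 0)}"
    unfolding bweight_def bdist_def lx using b0 bk by (intro arg_cong[where f=card] Collect_cong) auto
  also have "{s. s < k \<and> (\<exists>j<b. x ! ((s + j) mod k) \<noteq> 0)} = (if i = 0 then {} else {..<i} \<union> {k-b+1..<k})"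
  proof (cases "i = 0")
    case True
    have "x ! ((s + j) mod k) = 0" if "s < k" for s j
    proof -
      have "(s+j) mod k < k" using that by simp
      then show ?thesis using xn True by blast
    qed
    then show ?thesis using True by auto
  next
    case False
    have eq: "s < k \<and> (\<exists>j<b. x ! ((s + j) mod k) \<noteq> 0) \<longleftrightarrow> s \<in> {..<i} \<union> {k-b+1..<k}" for s
    proof
      assume h: "s < k \<and> (\<exists>j<b. x ! ((s + j) mod k) \<noteq> 0)"
      then obtain j where j: "j < b" "x ! ((s + j) mod k) \<noteq> 0" by auto
      have "(s+j) mod k < k" using bk b0 by simp
      then have "(s+j) mod k < i" using xn j by blast
      show "s \<in> {..<i} \<union> {k-b+1..<k}"
      proof (rule ccontr)
        assume "s \<notin> {..<i} \<union> {k-b+1..<k}"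
        moreover have "s < k" using h by simp
        ultimately have "i \<le> s" "s \<le> k - b" by auto
        then have "i \<le> s" "s + j < k" using j(1) bk by linarith+
        then show False using \<open>(s+j) mod k < i\<close> by simp
      qed
    next
      assume h: "s \<in> {..<i} \<union> {k-b+1..<k}"
      show "s < k \<and> (\<exists>j<b. x ! ((s + j) mod k) \<noteq> 0)"
      proof (cases "s < i")
        case True
        then have "s < k" using i bk b0 by linarith
        then show ?thesis using True xn b0 by (intro conjI exI[of _ 0]) auto
      next
        case F: False
        then have s: "k - b + 1 \<le> s" "s < k" using h by auto
        have "(s + (k - s)) mod k = 0" using s by simp
        moreover have "x ! 0 \<noteq> 0" using xn[of 0] \<open>i \<noteq> 0\<close> s by simp
        moreover have "k - s < b" using s bk by linarith
        ultimately show ?thesis using s by (intro conjI exI[of _ "k - s"]) auto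
      qed
    qed
    have "{s. s < k \<and> (\<exists>j<b. x ! ((s + j) mod k) \<noteq> 0)} = {..<i} \<union> {k-b+1..<k}"
      apply (rule set_eqI) apply (subst mem_Collect_eq) apply (rule eq) done
    then show ?thesis using False by (simp only: if_False)
  qed
  also have "card (if i = 0 then {} else {..<i} \<union> {k-b+1..<k}) = (if i = 0 then 0 else i + b - 1)"
  proof (cases "i = 0")
    case False
    have "{..<i} \<inter> {k-b+1..<k} = {}" using i by auto
    then have "card ({..<i} \<union> {k-b+1..<k}) = i + (k - (k-b+1))" by (simp add: card_Un_disjoint)
    then show ?thesis using False bk b0 by simp
  qed simp
  finally show ?thesis by (simp add: x_def)
qed

lemma hamming_le:
  assumes "length z = length w" "0 < b"
  shows "card {i. i < length z \<and> z!i \<noteq> w!i} \<le> bdist b z w"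
  unfolding bdist_def
  by (rule card_mono) (use assms in \<open>auto intro!: exI[of _ 0]\<close>)

lemma concat_nth: "q < length xs \<Longrightarrow> l < m \<Longrightarrow> concat (replicate m xs) ! (q + length xs * l) = xs ! q"
proof (induction m arbitrary: l)
  case (Suc m)
  then show ?case by (cases l) (auto simp: nth_append)
qed simp

lemma exists_code:
  assumes "0 < k" and that: "0 < b"
  shows "\<exists>p. is_fcbsc b k t f (2*t*k) (p :: 'a list \<Rightarrow> 'a list)"
proof -
  define p where "p x = concat (replicate (2*t) x)" for x :: "'a list"
  have "is_fcbsc b k t f (2*t*k) p"
    unfolding is_fcbsc_def
  proof (intro conjI allI impI)
    fix x :: "'a list" assume "length x = k" then show "length (p x) = 2*t*k"
      by (simp add: p_def length_concat sum_list_replicate)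
  next
    fix x1 x2 :: "'a list" assume l: "length x1 = k" "length x2 = k" and "f x1 \<noteq> f x2"
    then have "x1 \<noteq> x2" by auto
    then obtain q where q: "q < k" "x1 ! q \<noteq> x2 ! q" using l by (metis nth_equalityI)
    have e: "(x::'a list) @ p x = concat (replicate (2*t+1) x)" for x by (simp add: p_def)
    define g where "g l = q + k * l" for l
    have len: "length (x @ p x) = k * (2*t+1)" if "length x = k" for x :: "'a list"
      using that by (simp add: p_def length_concat sum_list_replicate algebra_simps)
    have "g ` {..<2*t+1} \<subseteq> {i. i < length (x1 @ p x1) \<and> (x1 @ p x1)!i \<noteq> (x2 @ p x2)!i}"
    proof
      fix i assume "i \<in> g ` {..<2*t+1}"
      then obtain l where lt: "l < 2*t+1" and ie: "i = q + k * l" by (auto simp: g_def)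
      have "k * l \<le> k * (2*t)" using lt by simp
      then have "i < k + k * (2*t)" using q ie by linarith
      then have il: "i < k * (2*t+1)" by (simp add: algebra_simps)
      have n1: "(x1 @ p x1) ! i = x1 ! q"
        unfolding e ie using concat_nth[of q x1 l "2*t+1"] l q lt by simp
      have n2: "(x2 @ p x2) ! i = x2 ! q"
        unfolding e ie using concat_nth[of q x2 l "2*t+1"] l q lt by simp
      show "i \<in> {i. i < length (x1 @ p x1) \<and> (x1 @ p x1)!i \<noteq> (x2 @ p x2)!i}"
        using n1 n2 il len[OF l(1)] q by simp
    qed
    moreover have "inj g" unfolding g_def inj_def using \<open>0<k\<close> by auto
    ultimately have "card (g ` {..<2*t+1}) \<le> card {i. i < length (x1 @ p x1) \<and> (x1 @ p x1)!i \<noteq> (x2 @ p x2)!i}"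
      by (intro card_mono) auto
    moreover have "card (g ` {..<2*t+1}) = 2*t+1"
      using \<open>inj g\<close> by (simp add: card_image inj_on_subset)
    ultimately have "2*t+1 \<le> card {i. i < length (x1 @ p x1) \<and> (x1 @ p x1)!i \<noteq> (x2 @ p x2)!i}"
      by simp
    also have "\<dots> \<le> bdist b (x1 @ p x1) (x2 @ p x2)"
      using l by (intro hamming_le) (auto simp: p_def length_concat sum_list_replicate that)
    finally show "2*t+1 \<le> bdist b (x1 @ p x1) (x2 @ p x2)" .
  qed
  then show ?thesis by blast
qed


theorem lemma6p2:
  fixes a :: "'a::{finite, field}"
    and b k t :: nat
    and x :: "nat \<Rightarrow> 'a list"
    and B :: "nat \<Rightarrow> nat \<Rightarrow> nat"
  assumes "0 < b" and "0 < k" and "0 < t" and "b \<le> k"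
    and "a \<noteq> 0"
    and "\<And>i. i \<le> k - b + 1 \<Longrightarrow> x i = replicate i a @ replicate (k - i) 0"
    and "\<And>i j. B i j = (if i = j then 0
            else pos_part (2 * int t - 2 * int b + 3 - \<bar>int i - int j\<bar>))"
  shows "N_b TYPE('a) b (k - b + 2) B \<le> r_opt b (bweight b :: 'a list \<Rightarrow> nat) k t"
proof -
  note b0 = assms(1) and k0 = assms(2) and bk = assms(4) and a0 = assms(5)
    and xd = assms(6) and Bd = assms(7)
  define r where "r = r_opt b (bweight b :: 'a list \<Rightarrow> nat) k t"
  have "\<exists>p. is_fcbsc b k t (bweight b :: 'a list \<Rightarrow> nat) (2*t*k) (p :: 'a list \<Rightarrow> 'a list)"
    using exists_code[OF k0 b0] by blast
  then have "\<exists>p. is_fcbsc b k t (bweight b :: 'a list \<Rightarrow> nat) r (p :: 'a list \<Rightarrow> 'a list)"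
    unfolding r_def r_opt_def by (rule LeastI_ex[where P="\<lambda>r. \<exists>p. is_fcbsc b k t (bweight b :: 'a list \<Rightarrow> nat) r p", OF exI])
  then obtain p :: "'a list \<Rightarrow> 'a list" where p: "is_fcbsc b k t (bweight b) r p" by blast
  have lx: "length (x i) = k" if "i < k - b + 2" for i
    using xd[of i] that bk b0 by simp
  have xn: "x i ! q = (if q < i then a else 0)" if "i < k - b + 2" "q < k" for i q
    using xd[of i] that bk b0 xnth[of i k q a] by simp
  have wx: "bweight b (x i) = (if i = 0 then 0 else i + b - 1)" if "i < k - b + 2" for i
    using xd[of i] that weight_x[OF a0 b0 bk, of i] by simp
  have lp: "length (p (x i)) = r" if "i < k - b + 2" for i
    using p lx[OF that] unfolding is_fcbsc_def by blast
  have key: "B i j \<le> bdist b (p (x i)) (p (x j))" if ij: "i < k - b + 2" "j < k - b + 2" for i j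
  proof (cases "i = j")
    case True then show ?thesis using Bd by simp
  next
    case False
    have "bweight b (x i) \<noteq> bweight b (x j)" using wx[OF ij(1)] wx[OF ij(2)] False b0 by auto
    then have h1: "2 * t + 1 \<le> bdist b (x i @ p (x i)) (x j @ p (x j))"
      using p lx[OF ij(1)] lx[OF ij(2)] unfolding is_fcbsc_def by blast
    have D: "min i j \<le> q \<and> q < max i j" if "q < k" "x i ! q \<noteq> x j ! q" for q
    proof -
      have "(q < i) \<noteq> (q < j)" using that(2) xn[OF ij(1) that(1)] xn[OF ij(2) that(1)]
        by (cases "q < i"; cases "q < j") auto
      then show ?thesis by (cases "i \<le> j"; cases "q < i"; cases "q < j") (simp_all add: min_def max_def)
    qed
    have h2: "bdist b (x i @ p (x i)) (x j @ p (x j)) \<le> (max i j - min i j) + (b-1) + (b-1) + bdist b (p (x i)) (p (x j))"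
      by (rule concat_bound[OF lx[OF ij(1)] lx[OF ij(2)] lp[OF ij(1)] lp[OF ij(2)] bk b0 D])
    define d where "d = bdist b (p (x i)) (p (x j))"
    have hn: "2 * t + 1 \<le> (max i j - min i j) + (b-1) + (b-1) + d" using h1 h2 unfolding d_def by linarith
    have e1: "int (max i j - min i j) = \<bar>int i - int j\<bar>" by (cases "i \<le> j") (simp_all add: max_def min_def)
    have e2: "int (b - 1) = int b - 1" using b0 by simp
    have "int (2 * t + 1) \<le> int ((max i j - min i j) + (b-1) + (b-1) + d)" using hn by (simp only: of_nat_le_iff)
    then have "2 * int t + 1 \<le> \<bar>int i - int j\<bar> + (int b - 1) + (int b - 1) + int d"
      by (simp only: of_nat_add e1 e2 of_nat_mult of_nat_1 of_nat_numeral)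
    then have "2 * int t - 2 * int b + 3 - \<bar>int i - int j\<bar> \<le> int (bdist b (p (x i)) (p (x j)))"
      unfolding d_def by linarith
    then show ?thesis using Bd False by (simp add: pos_part_def)
  qed
  show ?thesis
    unfolding N_b_def r_def[symmetric]
  proof (rule Least_le)
    show "\<exists>P :: nat \<Rightarrow> 'a list. (\<forall>i<k - b + 2. length (P i) = r) \<and> (\<forall>i<k - b + 2. \<forall>j<k - b + 2. B i j \<le> bdist b (P i) (P j))"
      by (rule exI[of _ "\<lambda>i. p (x i)"]) (simp add: lp key)
  qed
qed

end
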